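(* Let $H$ and $G$ be bipartite graphs with vertex classes $\tilde U\dot\cup\tilde V$ and $U\dot\cup V$ respectively, such that $\deg_H(\tilde v)\le\Delta$ for all $\tilde v\in\tilde V$, and let $f,f':\tilde V\to V$ be injective functions with switching distance $\mathrm{sw}(f,f')\le s$. Then the neighbourhood distance of the candidate graphs satisfies $\mathrm{nd}_{\tilde U}(B_f(H,G),B_{f'}(H,G))\le 2s\Delta$.
   Context: For an injective $f:\tilde V\to V$, a vertex $u\in U$ is an $f$-candidate for $\tilde u\in\tilde U$ if $f(N_H(\tilde u))\subseteq N_G(u)$; the candidate graph $B_f(H,G)$ is the bipartite graph on $\tilde U\dot\cup U$ whose edges are the pairs $\tilde uu$ with $u$ an $f$-candidate for $\tilde u$. An injective $f'$ is obtained from an injective $f$ by a switching if there are $a,b$ in the domain with $f'(a)=f(b)$, $f'(b)=f(a)$ and $f'(w)=f(w)$ for all $w\notin\{a,b\}$; $\mathrm{sw}(f,f')\le s$ means $f'$ is obtainable from $f$ by a sequence of at most $s$ switchings. For bipartite graphs $B,B'$ on the same vertex set $\tilde U\dot\cup U$, $\mathrm{nd}_{\tilde U}(B,B')$ is the number of $\tilde u\in\tilde U$ with $N_B(\tilde u)\ne N_{B'}(\tilde u)$. *)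

theory Defs
  imports Main
begin

definition bipartite_graph :: "'x set \<Rightarrow> 'y set \<Rightarrow> ('x \<times> 'y) set \<Rightarrow> bool" where
  "bipartite_graph X Y E \<longleftrightarrow> finite X \<and> finite Y \<and> E \<subseteq> X \<times> Y"

definition nbhd1 :: "('x \<times> 'y) set \<Rightarrow> 'x \<Rightarrow> 'y set" where
  "nbhd1 E x = {y. (x, y) \<in> E}"

definition nbhd2 :: "('x \<times> 'y) set \<Rightarrow> 'y \<Rightarrow> 'x set" where
  "nbhd2 E y = {x. (x, y) \<in> E}"

definition candidate_graph ::
  "'ut set \<Rightarrow> ('ut \<times> 'vt) set \<Rightarrow> 'u set \<Rightarrow> ('u \<times> 'v) set \<Rightarrow> ('vt \<Rightarrow> 'v) \<Rightarrow> ('ut \<times> 'u) set" where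
  "candidate_graph Ut H U G f = {(ut, u). ut \<in> Ut \<and> u \<in> U \<and> f ` (nbhd1 H ut) \<subseteq> nbhd1 G u}"

definition switching :: "'a set \<Rightarrow> ('a \<Rightarrow> 'b) \<Rightarrow> ('a \<Rightarrow> 'b) \<Rightarrow> bool" where
  "switching A f f' \<longleftrightarrow> (\<exists>a\<in>A. \<exists>b\<in>A. f' a = f b \<and> f' b = f a \<and> (\<forall>w\<in>A - {a, b}. f' w = f w))"

definition sw_le :: "'a set \<Rightarrow> ('a \<Rightarrow> 'b) \<Rightarrow> ('a \<Rightarrow> 'b) \<Rightarrow> nat \<Rightarrow> bool" where
  "sw_le A f f' s \<longleftrightarrow> (\<exists>k \<le> s. \<exists>g :: nat \<Rightarrow> 'a \<Rightarrow> 'b.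
      g 0 = f \<and> (\<forall>w\<in>A. g k w = f' w) \<and> (\<forall>i\<le>k. inj_on (g i) A) \<and>
      (\<forall>i<k. switching A (g i) (g (Suc i))))"

definition nd :: "'x set \<Rightarrow> ('x \<times> 'y) set \<Rightarrow> ('x \<times> 'y) set \<Rightarrow> nat" where
  "nd X B B' = card {x \<in> X. nbhd1 B x \<noteq> nbhd1 B' x}"

end

theory Submission
  imports Defs
begin

lemma sw_card:
  assumes "\<forall>i<k. switching A (g i) (g (Suc i))"
  shows "card {w\<in>A. g k w \<noteq> g 0 w} \<le> 2 * k \<and> finite {w\<in>A. g k w \<noteq> g 0 w}"
  using assms
proof (induction k)
  case 0 then show ?case by simp
next
  case (Suc k)
  then have IH: "card {w\<in>A. g k w \<noteq> g 0 w} \<le> 2 * k" "finite {w\<in>A. g k w \<noteq> g 0 w}" by auto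
  from Suc.prems obtain a b where ab: "a \<in> A" "b \<in> A" "\<forall>w\<in>A - {a, b}. g (Suc k) w = g k w"
    unfolding switching_def by blast
  have sub: "{w\<in>A. g (Suc k) w \<noteq> g 0 w} \<subseteq> {w\<in>A. g k w \<noteq> g 0 w} \<union> {a,b}"
    using ab by auto
  have fin: "finite ({w\<in>A. g k w \<noteq> g 0 w} \<union> {a,b})" using IH by simp
  have "card ({w\<in>A. g k w \<noteq> g 0 w} \<union> {a,b}) \<le> card {w\<in>A. g k w \<noteq> g 0 w} + card {a,b}"
    by (rule card_Un_le)
  also have "\<dots> \<le> 2 * k + 2" using IH by (simp add: card_insert_if)
  finally show ?case using card_mono[OF fin sub] finite_subset[OF sub fin] by simp
qed

theorem lemma11p4:
  fixes Ut :: "'ut set" and Vt :: "'vt set" and U :: "'u set" and V :: "'v set"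
    and H :: "('ut \<times> 'vt) set" and G :: "('u \<times> 'v) set"
    and f f' :: "'vt \<Rightarrow> 'v" and s \<Delta> :: nat
  assumes "bipartite_graph Ut Vt H" and "bipartite_graph U V G"
    and "\<forall>vt\<in>Vt. card (nbhd2 H vt) \<le> \<Delta>"
    and "inj_on f Vt" and "f ` Vt \<subseteq> V"
    and "inj_on f' Vt" and "f' ` Vt \<subseteq> V"
    and "sw_le Vt f f' s"
  shows "nd Ut (candidate_graph Ut H U G f) (candidate_graph Ut H U G f') \<le> 2 * s * \<Delta>"
proof -
  from assms(8) obtain k g where k: "k \<le> s" "g 0 = f" "\<forall>w\<in>Vt. g k w = f' w"
    "\<forall>i<k. switching Vt (g i) (g (Suc i))" unfolding sw_le_def by blast
  define D where "D = {w\<in>Vt. f' w \<noteq> f w}"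
  have "D = {w\<in>Vt. g k w \<noteq> g 0 w}" using k unfolding D_def by auto
  with sw_card[OF k(4)] have D: "card D \<le> 2 * k" "finite D" by auto
  have HE: "H \<subseteq> Ut \<times> Vt" "finite Ut" using assms(1) unfolding bipartite_graph_def by auto
  let ?B = "{x \<in> Ut. nbhd1 (candidate_graph Ut H U G f) x \<noteq> nbhd1 (candidate_graph Ut H U G f') x}"
  have sub: "?B \<subseteq> (\<Union>w\<in>D. nbhd2 H w)"
  proof
    fix x assume x: "x \<in> ?B"
    show "x \<in> (\<Union>w\<in>D. nbhd2 H w)"
    proof (rule ccontr)
      assume "x \<notin> (\<Union>w\<in>D. nbhd2 H w)"
      then have "\<forall>w\<in>nbhd1 H x. f w = f' w"
        using HE unfolding D_def nbhd1_def nbhd2_def by auto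
      then have "f ` nbhd1 H x = f' ` nbhd1 H x" by (auto simp: image_def)
      then show False using x unfolding candidate_graph_def nbhd1_def by auto
    qed
  qed
  have "card ?B \<le> card (\<Union>w\<in>D. nbhd2 H w)"
  proof (rule card_mono[OF _ sub])
    have "(\<Union>w\<in>D. nbhd2 H w) \<subseteq> Ut" using HE unfolding nbhd2_def by auto
    then show "finite (\<Union>w\<in>D. nbhd2 H w)" using HE finite_subset by blast
  qed
  also have "\<dots> \<le> (\<Sum>w\<in>D. card (nbhd2 H w))" by (rule card_UN_le[OF D(2)])
  also have "\<dots> \<le> (\<Sum>w\<in>D. \<Delta>)"
    by (rule sum_mono) (use assms(3) D_def in auto)
  also have "\<dots> = card D * \<Delta>" by simp
  also have "\<dots> \<le> 2 * s * \<Delta>" using D k(1) by simp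
  finally show ?thesis unfolding nd_def .
qed

end
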